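(* Let $0<p<q<\infty$. Then there does not exist any continuous map $\tau:\mathbb{R}\to\mathbb{R}$ such that for some constant $C>0$, \[ |\tau^{-1}(E)|^{1/q}\le C|E|^{1/p} \] for all Lebesgue measurable sets $E\subset\mathbb{R}$.
   Context: $|\cdot|$ denotes Lebesgue measure on $\mathbb{R}$. *)

theory Defs
  imports "HOL-Analysis.Analysis"
begin

definition leb_outer :: "real set \<Rightarrow> ennreal" where
  "leb_outer A = (INF B \<in> {B \<in> sets lebesgue. A \<subseteq> B}. emeasure lebesgue B)"

text \<open>Real power of an extended nonnegative real, with \<infinity>^a = \<infinity> (used for a > 0).\<close>
definition epowr :: "ennreal \<Rightarrow> real \<Rightarrow> ennreal" where
  "epowr x a = (if x = top then top else ennreal (enn2real x powr a))"

end

theory Submission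
  imports Defs
begin

lemma leb_outer_eq: "A \<in> sets lebesgue \<Longrightarrow> leb_outer A = emeasure lebesgue A"
  unfolding leb_outer_def
  apply (rule antisym)
   apply (rule INF_lower, simp)
  apply (rule INF_greatest)
  apply (clarsimp simp del: emeasure_completion)
  apply (erule (1) emeasure_mono)
  done

lemma pre_borel:
  assumes "continuous_on UNIV (\<tau>::real\<Rightarrow>real)" "E \<in> sets borel"
  shows "\<tau> -` E \<in> sets borel"
  using measurable_sets_borel[OF borel_measurable_continuous_onI[OF assms(1)] assms(2)] .

lemma bound_one:
  fixes p q C a b :: real
  assumes p: "0 < p" "p < q" and C: "C > 0" and ab: "a \<le> b"
    and tc: "continuous_on UNIV \<tau>"
    and H: "epowr (leb_outer (\<tau> -` {a..b})) (1 / q)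
                    \<le> ennreal C * epowr (emeasure lebesgue {a..b}) (1 / p)"
  shows "emeasure lebesgue (\<tau> -` {a..b}) \<le> ennreal (C powr q * (b - a) powr (q / p))"
proof -
  have bs: "\<tau> -` {a..b} \<in> sets borel" by (rule pre_borel[OF tc]) simp
  hence ls: "\<tau> -` {a..b} \<in> sets lebesgue" by simp
  define M where "M = emeasure lebesgue (\<tau> -` {a..b})"
  have H2: "epowr M (1/q) \<le> ennreal (C * (b - a) powr (1/p))"
    using H ab C unfolding M_def leb_outer_eq[OF ls]
    by (simp add: epowr_def ennreal_mult)
  have "M \<noteq> top"
  proof
    assume "M = top"
    then show False using H2 by (simp add: epowr_def top_unique)
  qed
  then obtain m where m: "M = ennreal m" "m \<ge> 0" by (cases M) auto
  have "m powr (1/q) \<le> C * (b - a) powr (1/p)"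
    using H2 m C ab by (simp add: epowr_def)
  hence "(m powr (1/q)) powr q \<le> (C * (b - a) powr (1/p)) powr q"
    using p by (intro powr_mono2) auto
  moreover have "(m powr (1/q)) powr q = m" using p m by (simp add: powr_powr)
  moreover have "(C * (b - a) powr (1/p)) powr q = C powr q * (b - a) powr (q/p)"
    using C ab p by (simp add: powr_mult powr_powr)
  ultimately have "m \<le> C powr q * (b - a) powr (q/p)" by simp
  thus ?thesis using m unfolding M_def by simp
qed

theorem proposition5p1:
  fixes p q :: real
  assumes "0 < p" and "p < q"
  shows "\<not> (\<exists>\<tau> :: real \<Rightarrow> real. continuous_on UNIV \<tau> \<and>
            (\<exists>C :: real. C > 0 \<and>
               (\<forall>E \<in> sets lebesgue.
                  epowr (leb_outer (\<tau> -` E)) (1 / q)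
                    \<le> ennreal C * epowr (emeasure lebesgue E) (1 / p))))"
proof
  assume "\<exists>\<tau> :: real \<Rightarrow> real. continuous_on UNIV \<tau> \<and>
            (\<exists>C :: real. C > 0 \<and>
               (\<forall>E \<in> sets lebesgue.
                  epowr (leb_outer (\<tau> -` E)) (1 / q)
                    \<le> ennreal C * epowr (emeasure lebesgue E) (1 / p)))"
  then obtain \<tau> :: "real \<Rightarrow> real" and C where tc: "continuous_on UNIV \<tau>" and C: "C > 0" and
    H: "\<And>E. E \<in> sets lebesgue \<Longrightarrow> epowr (leb_outer (\<tau> -` E)) (1 / q)
                    \<le> ennreal C * epowr (emeasure lebesgue E) (1 / p)" by blast
  define y where "y = \<tau> 0"
  have "isCont \<tau> 0" using tc by (simp add: continuous_on_eq_continuous_at)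
  then obtain \<delta> where d: "\<delta> > 0" and dd0: "\<forall>x. x \<noteq> 0 \<and> dist x 0 < \<delta> \<longrightarrow> dist (\<tau> x) (\<tau> 0) < 1"
    unfolding isCont_def LIM_def by (meson zero_less_one)
  have dd: "\<And>x. dist x 0 < \<delta> \<Longrightarrow> dist (\<tau> x) (\<tau> 0) < 1"
    using dd0 by (metis dist_self zero_less_one)
  define K where "K = C powr q * 2 powr (q/p)"
  have bnd: "2 * \<delta> \<le> K * real N powr (1 - q/p)" if N: "N \<ge> 1" for N :: nat
  proof -
    define I where "I = (\<lambda>k::nat. {y - 1 + 2 * k / N .. y - 1 + 2 * (k+1) / N})"
    have sub: "{-\<delta><..<\<delta>} \<subseteq> (\<Union>k\<in>{..<N}. \<tau> -` I k)"
    proof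
      fix x assume "x \<in> {-\<delta><..<\<delta>}"
      hence "dist (\<tau> x) y < 1" using dd unfolding y_def by (auto simp: dist_real_def)
      hence t: "y - 1 < \<tau> x" "\<tau> x < y + 1" by (auto simp: dist_real_def)
      define k where "k = min (N - 1) (nat \<lfloor>(\<tau> x - (y - 1)) * N / 2\<rfloor>)"
      have "k < N" using N unfolding k_def by simp
      moreover have "\<tau> x \<in> I k"
      proof -
        let ?s = "(\<tau> x - (y - 1)) * N / 2"
        have s0: "?s \<ge> 0" using t by simp
        have Npos: "real N > 0" using N by simp
        have "(\<tau> x - (y - 1)) * real N < 2 * real N" using t Npos by (intro mult_strict_right_mono) auto
        hence sN: "?s < N" by simp
        have "real k \<le> ?s"
        proof -
          have "real k \<le> real (nat \<lfloor>?s\<rfloor>)" unfolding k_def by simp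
          also have "\<dots> \<le> ?s" using s0 by linarith
          finally show ?thesis .
        qed
        moreover have "?s \<le> real k + 1"
        proof (cases "nat \<lfloor>?s\<rfloor> \<le> N - 1")
          case True
          hence "k = nat \<lfloor>?s\<rfloor>" unfolding k_def by simp
          then show ?thesis using s0 by linarith
        next
          case False
          hence "k = N - 1" unfolding k_def by simp
          then show ?thesis using sN N by (simp add: of_nat_diff)
        qed
        ultimately show ?thesis unfolding I_def using Npos
          by (auto simp: field_simps)
      qed
      ultimately show "x \<in> (\<Union>k\<in>{..<N}. \<tau> -` I k)" by blast
    qed
    have meas: "(\<lambda>k. \<tau> -` I k) ` {..<N} \<subseteq> sets lebesgue"
      using pre_borel[OF tc] unfolding I_def by auto
    have "ennreal (2 * \<delta>) = emeasure lebesgue {-\<delta><..<\<delta>}" using d by simp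
    also have "\<dots> \<le> emeasure lebesgue (\<Union>k\<in>{..<N}. \<tau> -` I k)"
      using sub meas by (intro emeasure_mono) auto
    also have "\<dots> \<le> (\<Sum>k\<in>{..<N}. emeasure lebesgue (\<tau> -` I k))"
      by (rule emeasure_subadditive_finite[OF _ meas]) simp
    also have "\<dots> \<le> (\<Sum>k\<in>{..<N}. ennreal (C powr q * (2 / N) powr (q / p)))"
    proof (rule sum_mono)
      fix k assume "k \<in> {..<N}"
      have le: "y - 1 + 2 * k / N \<le> y - 1 + 2 * (k+1) / N" using N by (simp add: field_simps)
      have "emeasure lebesgue (\<tau> -` I k) \<le> ennreal (C powr q * ((y - 1 + 2 * (k+1) / N) - (y - 1 + 2 * k / N)) powr (q / p))"
        unfolding I_def
        by (rule bound_one[OF assms C le tc H]) simp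
      also have "(y - 1 + 2 * (k+1) / N) - (y - 1 + 2 * k / N) = 2 / N"
        using N by (simp add: field_simps)
      finally show "emeasure lebesgue (\<tau> -` I k) \<le> ennreal (C powr q * (2 / N) powr (q / p))" .
    qed
    also have "\<dots> = ennreal (N * (C powr q * (2 / N) powr (q / p)))"
      by (simp add: ennreal_mult' ennreal_of_nat_eq_real_of_nat)
    finally have "2 * \<delta> \<le> N * (C powr q * (2 / N) powr (q / p))"
      by (subst (asm) ennreal_le_iff) auto
    also have "N * (C powr q * (2 / N) powr (q / p)) = K * real N powr (1 - q/p)"
      using N unfolding K_def
      by (simp add: powr_divide powr_diff field_simps)
    finally show ?thesis .
  qed
  have "((\<lambda>N. K * real N powr (1 - q/p)) \<longlongrightarrow> K * 0) sequentially"
    using assms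
    by (intro tendsto_mult tendsto_const tendsto_neg_powr filterlim_real_sequentially)
       (auto simp: field_simps)
  hence "eventually (\<lambda>N. K * real N powr (1 - q/p) < 2 * \<delta>) sequentially"
    using d by (intro order_tendstoD) auto
  moreover have "eventually (\<lambda>N::nat. N \<ge> 1) sequentially" by (rule eventually_ge_at_top)
  ultimately have "eventually (\<lambda>N::nat. N \<ge> 1 \<and> K * real N powr (1 - q/p) < 2 * \<delta>) sequentially"
    by (simp add: eventually_conj_iff)
  then obtain M :: nat where MM: "\<And>n. n \<ge> M \<Longrightarrow> n \<ge> 1 \<and> K * real n powr (1 - q/p) < 2 * \<delta>"
    unfolding eventually_sequentially by blast
  obtain N :: nat where "N \<ge> 1" "K * real N powr (1 - q/p) < 2 * \<delta>" using MM[of M] by blast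
  thus False using bnd by fastforce
qed

end
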